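(* Let $X\in\mathbb R^{n\times p}$ be fixed, let $\mathbf y\in\mathbb R^n$ be a random vector with independent components satisfying, for some $\sigma\ge0$, $\mathbb E\,e^{t(\mathbf y_i-\mathbb E\mathbf y_i)}\le e^{\sigma^2t^2/2}$ for all $i$ and all $t\in\mathbb R$, and let $\hat Q(\beta)=\|X\beta-\mathbf y\|_2^2$. Let $\mathrm{cl}$ be a coding length with coding complexity $c(\cdot)$. Fix a target $\bar\beta\in\mathbb R^p$ and $\eta\in(0,1)$. Then with probability exceeding $1-\eta$, for all $\epsilon\ge0$ and all $\hat\beta\in\mathbb R^p$ such that $\hat Q(\hat\beta)\le\hat Q(\bar\beta)+\epsilon$, we have \[ \|X\hat\beta-\mathbb E\mathbf y\|_2\le\|X\bar\beta-\mathbb E\mathbf y\|_2+\sigma\sqrt{2\ln(6/\eta)}+2\left(7.4\sigma^2c(\hat\beta)+4.7\sigma^2\ln(6/\eta)+\epsilon\right)^{1/2}. \] Moreover, if the coding complexity $c(\cdot)$ is sub-additive, then (on the same event) \[ n\,\rho_-(c(\hat\beta)+c(\bar\beta))\,\|\hat\beta-\bar\beta\|_2^2\le 10\|X\bar\beta-\mathbb E\mathbf y\|_2^2+37\sigma^2c(\hat\beta)+29\sigma^2\ln(6/\eta)+2.5\epsilon. \]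
   Context: Let $\mathcal I=\{1,\ldots,p\}$ and $\mathrm{supp}(\beta)=\{j:\beta_j\ne0\}$. A function $\mathrm{cl}$ from subsets of $\mathcal I$ to $[0,\infty]$ is a coding length if $\sum_{F\subset\mathcal I,\,F\ne\emptyset}2^{-\mathrm{cl}(F)}\le1$, with $\mathrm{cl}(\emptyset)=0$. The coding complexity is $c(F)=|F|+\mathrm{cl}(F)$ for $F\subset\mathcal I$, and $c(\beta)=\min\{c(F):\mathrm{supp}(\beta)\subset F\}$ for $\beta\in\mathbb R^p$. It is sub-additive if $c(F\cup F')\le c(F)+c(F')$ for all $F,F'\subset\mathcal I$. For $F\subset\mathcal I$, $\rho_-(F)=\inf\{\frac1n\|X\beta\|_2^2/\|\beta\|_2^2:\beta\ne0,\ \mathrm{supp}(\beta)\subset F\}$, and for $s>0$, $\rho_-(s)=\inf\{\rho_-(F):F\subset\mathcal I,\ c(F)\le s\}$. *)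

theory Defs
  imports "HOL-Probability.Probability"
begin

text \<open>Index set I = {0..<p} (0-based rendering of {1..p}); vectors in R^p are
  functions nat => real of which only the coordinates j < p matter.\<close>

definition supp :: "nat \<Rightarrow> (nat \<Rightarrow> real) \<Rightarrow> nat set" where
  "supp p \<beta> = {j \<in> {..<p}. \<beta> j \<noteq> 0}"

definition cl_weight :: "ereal \<Rightarrow> real" where
  "cl_weight e = (if e = \<infinity> then 0 else 2 powr (- real_of_ereal e))"

definition is_coding_length :: "nat \<Rightarrow> (nat set \<Rightarrow> ereal) \<Rightarrow> bool" where
  "is_coding_length p cl \<longleftrightarrow>
     cl {} = 0 \<and> (\<forall>F. F \<subseteq> {..<p} \<longrightarrow> 0 \<le> cl F) \<and>
     (\<Sum>F \<in> {F. F \<subseteq> {..<p} \<and> F \<noteq> {}}. cl_weight (cl F)) \<le> 1"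

definition cc_set :: "(nat set \<Rightarrow> ereal) \<Rightarrow> nat set \<Rightarrow> ereal" where
  "cc_set cl F = ereal (real (card F)) + cl F"

definition cc_vec :: "nat \<Rightarrow> (nat set \<Rightarrow> ereal) \<Rightarrow> (nat \<Rightarrow> real) \<Rightarrow> ereal" where
  "cc_vec p cl \<beta> = Inf {cc_set cl F | F. F \<subseteq> {..<p} \<and> supp p \<beta> \<subseteq> F}"

definition subadditive_cc :: "nat \<Rightarrow> (nat set \<Rightarrow> ereal) \<Rightarrow> bool" where
  "subadditive_cc p cl \<longleftrightarrow>
     (\<forall>F F'. F \<subseteq> {..<p} \<longrightarrow> F' \<subseteq> {..<p} \<longrightarrow> cc_set cl (F \<union> F') \<le> cc_set cl F + cc_set cl F')"

definition matvec :: "nat \<Rightarrow> (nat \<Rightarrow> nat \<Rightarrow> real) \<Rightarrow> (nat \<Rightarrow> real) \<Rightarrow> nat \<Rightarrow> real" where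
  "matvec p X \<beta> = (\<lambda>i. \<Sum>j<p. X i j * \<beta> j)"

definition norm2 :: "nat \<Rightarrow> (nat \<Rightarrow> real) \<Rightarrow> real" where
  "norm2 m v = sqrt (\<Sum>i<m. (v i)\<^sup>2)"

definition rho_minus_set :: "nat \<Rightarrow> nat \<Rightarrow> (nat \<Rightarrow> nat \<Rightarrow> real) \<Rightarrow> nat set \<Rightarrow> ereal" where
  "rho_minus_set n p X F =
     Inf {ereal ((1 / real n) * (norm2 n (matvec p X \<beta>))\<^sup>2 / (norm2 p \<beta>)\<^sup>2) | \<beta>.
            (\<exists>j<p. \<beta> j \<noteq> 0) \<and> supp p \<beta> \<subseteq> F}"

definition rho_minus :: "nat \<Rightarrow> nat \<Rightarrow> (nat \<Rightarrow> nat \<Rightarrow> real) \<Rightarrow> (nat set \<Rightarrow> ereal) \<Rightarrow> ereal \<Rightarrow> ereal" where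
  "rho_minus n p X cl s = Inf {rho_minus_set n p X F | F. F \<subseteq> {..<p} \<and> cc_set cl F \<le> s}"

end

theory Submission
  imports Defs
begin


definition ip :: "nat \<Rightarrow> (nat\<Rightarrow>real) \<Rightarrow> (nat\<Rightarrow>real) \<Rightarrow> real" where
  "ip n u v = (\<Sum>i<n. u i * v i)"

definition orthon :: "nat \<Rightarrow> (nat \<Rightarrow> nat \<Rightarrow> real) \<Rightarrow> nat \<Rightarrow> bool" where
  "orthon n e d \<longleftrightarrow> (\<forall>j<d. \<forall>k<d. ip n (e j) (e k) = (if j = k then 1 else 0))"

definition inspan :: "nat \<Rightarrow> (nat \<Rightarrow> nat \<Rightarrow> real) \<Rightarrow> nat \<Rightarrow> (nat \<Rightarrow> real) \<Rightarrow> bool" where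
  "inspan n e d v \<longleftrightarrow> (\<exists>c. \<forall>i<n. v i = (\<Sum>j<d. c j * e j i))"

lemma ip_comm: "ip n u v = ip n v u"
  by (simp add: ip_def mult.commute)

lemma ip_lincomb: "ip n (\<lambda>i. \<Sum>j<d. c j * e j i) u = (\<Sum>j<d. c j * ip n (e j) u)"
  unfolding ip_def by (simp add: sum_distrib_left sum_distrib_right sum.swap[of _ "{..<d}"] mult.assoc)

lemma ip_cong: "(\<And>i. i < n \<Longrightarrow> u i = u' i) \<Longrightarrow> (\<And>i. i < n \<Longrightarrow> v i = v' i) \<Longrightarrow> ip n u v = ip n u' v'"
  unfolding ip_def by (intro sum.cong) auto

lemma orthon_coeff:
  assumes "orthon n e d" "k < d"
  shows "ip n (\<lambda>i. \<Sum>j<d. c j * e j i) (e k) = c k"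
proof -
  have "ip n (\<lambda>i. \<Sum>j<d. c j * e j i) (e k) = (\<Sum>j<d. c j * (if j = k then 1 else 0))"
    unfolding ip_lincomb using assms by (intro sum.cong) (auto simp: orthon_def)
  also have "\<dots> = c k" using assms(2) by (simp add: if_distrib sum.delta cong: if_cong)
  finally show ?thesis .
qed

lemma orthon_norm:
  assumes "orthon n e d"
  shows "ip n (\<lambda>i. \<Sum>j<d. c j * e j i) (\<lambda>i. \<Sum>j<d. c j * e j i) = (\<Sum>j<d. (c j)\<^sup>2)"
proof -
  have "ip n (\<lambda>i. \<Sum>j<d. c j * e j i) (\<lambda>i. \<Sum>j<d. c j * e j i)
      = (\<Sum>k<d. c k * ip n (\<lambda>i. \<Sum>j<d. c j * e j i) (e k))"
    by (subst ip_comm) (simp add: ip_lincomb ip_comm)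
  also have "\<dots> = (\<Sum>k<d. c k * c k)"
    using assms by (intro sum.cong) (auto simp: orthon_coeff)
  finally show ?thesis by (simp add: power2_eq_square)
qed

lemma ip_self_nonneg: "0 \<le> ip n u u"
  unfolding ip_def by (intro sum_nonneg) auto

lemma ip_self_zero: "ip n u u = 0 \<Longrightarrow> i < n \<Longrightarrow> u i = 0"
  unfolding ip_def by (subst (asm) sum_nonneg_eq_0_iff) auto

lemma gram_schmidt:
  "\<exists>e d. d \<le> length V \<and> orthon n e d \<and> (\<forall>v\<in>set V. inspan n e d v)"
proof (induction V)
  case Nil
  show ?case by (rule exI[of _ "\<lambda>_ _. 0"], rule exI[of _ 0]) (auto simp: orthon_def)
next
  case (Cons v V)
  then obtain e d where d: "d \<le> length V" and on: "orthon n e d" and sp: "\<forall>v\<in>set V. inspan n e d v"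
    by blast
  define r where "r = (\<lambda>i. v i - (\<Sum>j<d. ip n v (e j) * e j i))"
  have rv: "v i = (\<Sum>j<d. ip n v (e j) * e j i) + r i" for i by (simp add: r_def)
  show ?case
  proof (cases "ip n r r = 0")
    case True
    have "inspan n e d v" unfolding inspan_def
      using ip_self_zero[OF True] by (intro exI[of _ "\<lambda>j. ip n v (e j)"]) (auto simp: rv)
    with d on sp show ?thesis by (intro exI[of _ e] exI[of _ d]) auto
  next
    case False
    define s where "s = sqrt (ip n r r)"
    have s: "s > 0" using False ip_self_nonneg[of n r] by (simp add: s_def)
    define e' where "e' = e(d := (\<lambda>i. r i / s))"
    have e'_lt: "j < d \<Longrightarrow> e' j = e j" for j by (simp add: e'_def)
    have rk: "ip n r (e k) = 0" if "k < d" for k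
    proof -
      have "ip n r (e k) = ip n v (e k) - ip n (\<lambda>i. \<Sum>j<d. ip n v (e j) * e j i) (e k)"
        by (simp add: r_def ip_def sum_subtractf left_diff_distrib)
      also have "\<dots> = 0" using orthon_coeff[OF on that] by simp
      finally show ?thesis .
    qed
    have rr: "ip n (\<lambda>i. r i / s) (\<lambda>i. r i / s) = 1"
      using s False ip_self_nonneg[of n r]
      by (simp add: ip_def sum_divide_distrib[symmetric] s_def power2_eq_square[symmetric] divide_simps)
    have rek: "ip n (\<lambda>i. r i / s) (e k) = 0" if "k < d" for k
      using rk[OF that] by (simp add: ip_def sum_divide_distrib[symmetric])
    have on': "orthon n e' (Suc d)"
      unfolding orthon_def
    proof (intro allI impI)
      fix j k assume j: "j < Suc d" and k: "k < Suc d"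
      show "ip n (e' j) (e' k) = (if j = k then 1 else 0)"
      proof (cases "j = d"; cases "k = d")
        assume "j = d" "k = d" then show ?thesis by (simp add: e'_def rr)
      next
        assume "j = d" "k \<noteq> d" then show ?thesis using k rek[of k] by (simp add: e'_def)
      next
        assume "j \<noteq> d" "k = d" then show ?thesis using j rek[of j] by (simp add: e'_def ip_comm)
      next
        assume "j \<noteq> d" "k \<noteq> d" then show ?thesis using j k on by (simp add: e'_def orthon_def)
      qed
    qed
    have sp': "inspan n e' (Suc d) u" if "inspan n e d u" for u
    proof -
      from that obtain c where c: "\<forall>i<n. u i = (\<Sum>j<d. c j * e j i)" by (auto simp: inspan_def)
      show ?thesis unfolding inspan_def
        by (rule exI[of _ "c(d := 0)"]) (auto simp: c e'_def intro!: sum.cong)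
    qed
    have "inspan n e' (Suc d) v" unfolding inspan_def
      using s by (intro exI[of _ "(\<lambda>j. ip n v (e j))(d := s)"]) (auto simp: e'_def rv intro!: sum.cong)
    with d on' sp sp' show ?thesis by (intro exI[of _ e'] exI[of _ "Suc d"]) auto
  qed
qed



abbreviation "NN \<equiv> density lborel (\<lambda>x. ennreal (normal_density 0 1 x))"

lemma nn_integral_normal_density: "0 < \<sigma> \<Longrightarrow> (\<integral>\<^sup>+x. ennreal (normal_density \<mu> \<sigma> x) \<partial>lborel) = 1"
  using integrable_normal_density[of \<sigma> \<mu>] integral_normal_density[of \<sigma> \<mu>]
  by (subst nn_integral_eq_integral) auto

lemma gauss_nn_integral:
  assumes "\<And>x. normal_density 0 1 x * f x = k * normal_density \<mu> \<sigma> x" "0 \<le> k"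
    and [measurable]: "f \<in> borel_measurable borel" and "0 < \<sigma>"
  shows "(\<integral>\<^sup>+x. ennreal (f x) \<partial>NN) = ennreal k"
proof -
  have "(\<integral>\<^sup>+x. ennreal (f x) \<partial>NN) = (\<integral>\<^sup>+x. ennreal (normal_density 0 1 x) * ennreal (f x) \<partial>lborel)"
    by (subst nn_integral_density) auto
  also have "\<dots> = (\<integral>\<^sup>+x. ennreal k * ennreal (normal_density \<mu> \<sigma> x) \<partial>lborel)"
  proof (intro nn_integral_cong)
    fix x
    show "ennreal (normal_density 0 1 x) * ennreal (f x) = ennreal k * ennreal (normal_density \<mu> \<sigma> x)"
    proof (cases "f x \<ge> 0")
      case True thus ?thesis using assms(1)[of x] assms(2) by (simp add: ennreal_mult[symmetric])
    next
      case False
      have "normal_density 0 1 x > 0" by (rule normal_density_pos) simp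
      with False have "normal_density 0 1 x * f x < 0" by (simp add: mult_pos_neg)
      with assms(1)[of x] assms(2) have False by (metis mult_nonneg_nonneg normal_density_nonneg not_le)
      thus ?thesis ..
    qed
  qed
  also have "\<dots> = ennreal k" using assms(4) by (simp add: nn_integral_cmult nn_integral_normal_density)
  finally show ?thesis .
qed

lemma gauss_mgf: "(\<integral>\<^sup>+x. ennreal (exp (c * x)) \<partial>NN) = ennreal (exp (c\<^sup>2 / 2))"
proof (rule gauss_nn_integral)
  fix x
  have "- x\<^sup>2 / 2 + c * x = c\<^sup>2/2 + (-(x - c)\<^sup>2 / 2)"
    by (simp add: power2_eq_square field_simps)
  hence "exp (- x\<^sup>2 / 2) * exp (c * x) = exp (c\<^sup>2/2) * exp (-(x - c)\<^sup>2 / 2)"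
    unfolding exp_add[symmetric] by metis
  thus "normal_density 0 1 x * exp (c * x) = exp (c\<^sup>2 / 2) * normal_density c 1 x"
    by (simp add: normal_density_def)
qed simp_all

lemma gauss_sq: "(\<integral>\<^sup>+x. ennreal (exp (a * x + x\<^sup>2 / 4)) \<partial>NN) = ennreal (sqrt 2 * exp (a\<^sup>2))"
proof (rule gauss_nn_integral)
  fix x
  have "- x\<^sup>2 / 2 + (a * x + x\<^sup>2 / 4) = a\<^sup>2 + (-(x - 2*a)\<^sup>2 / 4)"
    by (simp add: power2_eq_square field_simps)
  hence "exp (- x\<^sup>2 / 2) * exp (a * x + x\<^sup>2 / 4) = exp (a\<^sup>2) * exp (-(x - 2*a)\<^sup>2 / 4)"
    unfolding exp_add[symmetric] by metis
  moreover have "sqrt (2 * pi * (sqrt 2)\<^sup>2) = sqrt 2 * sqrt (2 * pi)"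
    by (simp add: real_sqrt_mult[symmetric])
  ultimately show "normal_density 0 1 x * exp (a * x + x\<^sup>2 / 4) = sqrt 2 * exp (a\<^sup>2) * normal_density (2*a) (sqrt 2) x"
    by (simp add: normal_density_def field_simps)
qed simp_all



locale subg = prob_space M for M :: "'a measure" +
  fixes n :: nat and Y :: "nat \<Rightarrow> 'a \<Rightarrow> real" and m :: "nat \<Rightarrow> real" and s :: real
  assumes indep: "indep_vars (\<lambda>_. borel) Y {..<n}"
    and s_pos: "0 < s"
    and mgf: "\<And>i t. i < n \<Longrightarrow> (\<integral>\<^sup>+\<omega>. ennreal (exp (t * (Y i \<omega> - m i))) \<partial>M) \<le> ennreal (exp (s\<^sup>2 * t\<^sup>2 / 2))"
begin

definition xi :: "'a \<Rightarrow> nat \<Rightarrow> real" where "xi \<omega> = (\<lambda>i. Y i \<omega> - m i)"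

lemma Y_meas: "i < n \<Longrightarrow> Y i \<in> borel_measurable M"
  using indep by (auto simp: indep_vars_def)

lemma ip_xi_meas[measurable]: "(\<lambda>\<omega>. ip n (xi \<omega>) w) \<in> borel_measurable M"
  unfolding ip_def xi_def by (intro borel_measurable_sum borel_measurable_times borel_measurable_diff Y_meas) auto

lemma base: "(\<integral>\<^sup>+\<omega>. ennreal (exp (ip n (xi \<omega>) w)) \<partial>M) \<le> ennreal (exp (s\<^sup>2 / 2 * ip n w w))"
proof -
  have "(\<integral>\<^sup>+\<omega>. ennreal (exp (ip n (xi \<omega>) w)) \<partial>M)
      = (\<integral>\<^sup>+\<omega>. (\<Prod>i\<in>{..<n}. ennreal (exp (w i * (Y i \<omega> - m i)))) \<partial>M)"
    by (intro nn_integral_cong) (simp add: ip_def xi_def exp_sum prod_ennreal mult.commute)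
  also have "\<dots> = (\<Prod>i\<in>{..<n}. \<integral>\<^sup>+\<omega>. ennreal (exp (w i * (Y i \<omega> - m i))) \<partial>M)"
    by (intro indep_vars_nn_integral indep_vars_compose2[OF indep]) auto
  also have "\<dots> \<le> (\<Prod>i\<in>{..<n}. ennreal (exp (s\<^sup>2 * (w i)\<^sup>2 / 2)))"
    by (intro prod_mono_ennreal mgf) auto
  also have "\<dots> = ennreal (exp (s\<^sup>2 / 2 * ip n w w))"
    by (simp add: prod_ennreal exp_sum[symmetric] ip_def sum_distrib_left power2_eq_square mult_ac)
  finally show ?thesis .
qed

lemma orthon_mono: "orthon n e (Suc d) \<Longrightarrow> orthon n e d"
  by (auto simp: orthon_def)

lemma ip_add_right: "ip n u (\<lambda>i. v i + a * z i) = ip n u v + a * ip n u z"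
  by (simp add: ip_def sum.distrib sum_distrib_left algebra_simps)

lemma ip_scale_right: "ip n u (\<lambda>i. a * z i) = a * ip n u z"
  by (simp add: ip_def sum_distrib_left algebra_simps)

lemma ip_add_left: "ip n (\<lambda>i. v i + a * z i) u = ip n v u + a * ip n z u"
  by (simp add: ip_def sum.distrib sum_distrib_left algebra_simps)

lemma sigma_NN: "sigma_finite_measure NN"
  by (rule prob_space_imp_sigma_finite) (rule prob_space_normal_density, simp)

lemma Q:
  assumes "orthon n e d"
  shows "(\<integral>\<^sup>+\<omega>. ennreal (exp (ip n (xi \<omega>) w + 1 / (4 * s\<^sup>2) * (\<Sum>j<d. (ip n (xi \<omega>) (e j))\<^sup>2))) \<partial>M)
     \<le> ennreal (sqrt 2 ^ d * exp (s\<^sup>2/2 * (ip n w w + (\<Sum>j<d. (ip n w (e j))\<^sup>2))))"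
  using assms
proof (induction d arbitrary: w)
  case 0
  then show ?case using base[of w] by simp
next
  case (Suc d)
  note on = Suc.prems
  have IH: "\<And>w. (\<integral>\<^sup>+\<omega>. ennreal (exp (ip n (xi \<omega>) w + 1 / (4 * s\<^sup>2) * (\<Sum>j<d. (ip n (xi \<omega>) (e j))\<^sup>2))) \<partial>M)
     \<le> ennreal (sqrt 2 ^ d * exp (s\<^sup>2/2 * (ip n w w + (\<Sum>j<d. (ip n w (e j))\<^sup>2))))"
    using Suc.IH orthon_mono[OF on] by blast
  define c where "c = 1 / (s * sqrt 2)"
  have c2: "c\<^sup>2 = 2 * (1 / (4 * s\<^sup>2))" using s_pos by (simp add: c_def power2_eq_square field_simps)
  have s2c2: "s\<^sup>2 * c\<^sup>2 = 1/2" unfolding c2 using s_pos by (simp add: field_simps)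
  have edd: "ip n (e d) (e d) = 1" and edj: "\<And>j. j < d \<Longrightarrow> ip n (e d) (e j) = 0"
    using on by (auto simp: orthon_def)
  define A where "A \<omega> = ip n (xi \<omega>) w + 1 / (4 * s\<^sup>2) * (\<Sum>j<d. (ip n (xi \<omega>) (e j))\<^sup>2)" for \<omega>
  define Z where "Z \<omega> = ip n (xi \<omega>) (e d)" for \<omega>
  have [measurable]: "A \<in> borel_measurable M" "Z \<in> borel_measurable M"
    unfolding A_def Z_def by measurable
  interpret P: pair_sigma_finite M NN
    by (intro pair_sigma_finite.intro sigma_NN prob_space_imp_sigma_finite) unfold_locales
  have "(\<integral>\<^sup>+\<omega>. ennreal (exp (ip n (xi \<omega>) w + 1 / (4 * s\<^sup>2) * (\<Sum>j<Suc d. (ip n (xi \<omega>) (e j))\<^sup>2))) \<partial>M)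
      = (\<integral>\<^sup>+\<omega>. (\<integral>\<^sup>+g. ennreal (exp (A \<omega> + c * Z \<omega> * g)) \<partial>NN) \<partial>M)"
  proof (intro nn_integral_cong)
    fix \<omega>
    have "(\<integral>\<^sup>+g. ennreal (exp (A \<omega> + c * Z \<omega> * g)) \<partial>NN)
        = (\<integral>\<^sup>+g. ennreal (exp (A \<omega>)) * ennreal (exp ((c * Z \<omega>) * g)) \<partial>NN)"
      by (intro nn_integral_cong) (simp add: exp_add ennreal_mult)
    also have "\<dots> = ennreal (exp (A \<omega>)) * ennreal (exp ((c * Z \<omega>)\<^sup>2 / 2))"
      by (subst nn_integral_cmult) (auto simp: gauss_mgf)
    also have "\<dots> = ennreal (exp (ip n (xi \<omega>) w + 1 / (4 * s\<^sup>2) * (\<Sum>j<Suc d. (ip n (xi \<omega>) (e j))\<^sup>2)))"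
      by (simp add: ennreal_mult[symmetric] exp_add[symmetric] A_def Z_def power_mult_distrib c2 algebra_simps)
    finally show "ennreal (exp (ip n (xi \<omega>) w + 1 / (4 * s\<^sup>2) * (\<Sum>j<Suc d. (ip n (xi \<omega>) (e j))\<^sup>2)))
       = (\<integral>\<^sup>+g. ennreal (exp (A \<omega> + c * Z \<omega> * g)) \<partial>NN)" by simp
  qed
  also have "\<dots> = (\<integral>\<^sup>+g. (\<integral>\<^sup>+\<omega>. ennreal (exp (A \<omega> + c * Z \<omega> * g)) \<partial>M) \<partial>NN)"
    by (rule P.Fubini'[symmetric]) measurable
  also have "\<dots> \<le> (\<integral>\<^sup>+g. ennreal (sqrt 2 ^ d * exp (s\<^sup>2/2 * (ip n w w + (\<Sum>j<d. (ip n w (e j))\<^sup>2)))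
                     * exp (s\<^sup>2 * c * ip n w (e d) * g + g\<^sup>2 / 4)) \<partial>NN)"
  proof (intro nn_integral_mono)
    fix g
    define w' where "w' = (\<lambda>i. w i + (c * g) * e d i)"
    have "(\<integral>\<^sup>+\<omega>. ennreal (exp (A \<omega> + c * Z \<omega> * g)) \<partial>M)
        = (\<integral>\<^sup>+\<omega>. ennreal (exp (ip n (xi \<omega>) w' + 1 / (4 * s\<^sup>2) * (\<Sum>j<d. (ip n (xi \<omega>) (e j))\<^sup>2))) \<partial>M)"
      by (intro nn_integral_cong) (simp add: A_def Z_def w'_def ip_add_right ip_scale_right algebra_simps)
    also have "\<dots> \<le> ennreal (sqrt 2 ^ d * exp (s\<^sup>2/2 * (ip n w' w' + (\<Sum>j<d. (ip n w' (e j))\<^sup>2))))"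
      by (rule IH)
    also have "ip n w' w' = ip n w w + 2 * (c * g) * ip n w (e d) + (c * g)\<^sup>2"
      unfolding w'_def ip_add_left ip_add_right using edd by (simp add: ip_comm[of n "e d" w] power2_eq_square algebra_simps)
    also have "(\<Sum>j<d. (ip n w' (e j))\<^sup>2) = (\<Sum>j<d. (ip n w (e j))\<^sup>2)"
      unfolding w'_def ip_add_left using edj by simp
    also have "sqrt 2 ^ d * exp (s\<^sup>2/2 * (ip n w w + 2 * (c * g) * ip n w (e d) + (c * g)\<^sup>2 + (\<Sum>j<d. (ip n w (e j))\<^sup>2)))
       = sqrt 2 ^ d * exp (s\<^sup>2/2 * (ip n w w + (\<Sum>j<d. (ip n w (e j))\<^sup>2))) * exp (s\<^sup>2 * c * ip n w (e d) * g + g\<^sup>2 / 4)"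
    proof -
      have "s\<^sup>2/2 * (ip n w w + 2 * (c * g) * ip n w (e d) + (c * g)\<^sup>2 + (\<Sum>j<d. (ip n w (e j))\<^sup>2))
          = s\<^sup>2/2 * (ip n w w + (\<Sum>j<d. (ip n w (e j))\<^sup>2)) + (s\<^sup>2 * c * ip n w (e d) * g + (s\<^sup>2 * c\<^sup>2) * g\<^sup>2 / 2)"
        by (simp add: power_mult_distrib algebra_simps)
      also have "\<dots> = s\<^sup>2/2 * (ip n w w + (\<Sum>j<d. (ip n w (e j))\<^sup>2)) + (s\<^sup>2 * c * ip n w (e d) * g + g\<^sup>2 / 4)"
        by (simp add: s2c2)
      finally show ?thesis by (simp only: exp_add mult.assoc)
    qed
    finally show "(\<integral>\<^sup>+\<omega>. ennreal (exp (A \<omega> + c * Z \<omega> * g)) \<partial>M)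
      \<le> ennreal (sqrt 2 ^ d * exp (s\<^sup>2/2 * (ip n w w + (\<Sum>j<d. (ip n w (e j))\<^sup>2)))
                     * exp (s\<^sup>2 * c * ip n w (e d) * g + g\<^sup>2 / 4))" .
  qed
  also have "\<dots> = ennreal (sqrt 2 ^ d * exp (s\<^sup>2/2 * (ip n w w + (\<Sum>j<d. (ip n w (e j))\<^sup>2))))
                     * (\<integral>\<^sup>+g. ennreal (exp (s\<^sup>2 * c * ip n w (e d) * g + g\<^sup>2 / 4)) \<partial>NN)"
    by (subst nn_integral_cmult[symmetric]) (auto simp: ennreal_mult)
  also have "\<dots> = ennreal (sqrt 2 ^ d * exp (s\<^sup>2/2 * (ip n w w + (\<Sum>j<d. (ip n w (e j))\<^sup>2))))
                     * ennreal (sqrt 2 * exp ((s\<^sup>2 * c * ip n w (e d))\<^sup>2))"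
    by (simp add: gauss_sq)
  also have "\<dots> = ennreal (sqrt 2 ^ Suc d * exp (s\<^sup>2/2 * (ip n w w + (\<Sum>j<Suc d. (ip n w (e j))\<^sup>2))))"
  proof -
    have "(s\<^sup>2 * c * ip n w (e d))\<^sup>2 = s\<^sup>2 / 2 * (ip n w (e d))\<^sup>2"
      using s2c2 by (simp add: power_mult_distrib power2_eq_square) (simp add: algebra_simps)
    thus ?thesis
      by (simp add: ennreal_mult[symmetric] exp_add[symmetric] algebra_simps)
  qed
  finally show ?case .
qed

lemma S_meas[measurable]: "(\<lambda>\<omega>. (\<Sum>j<d. (ip n (xi \<omega>) (e j))\<^sup>2)) \<in> borel_measurable M"
  by measurable

lemma tail:
  assumes "orthon n e d"
  shows "emeasure M {\<omega>\<in>space M. t \<le> (\<Sum>j<d. (ip n (xi \<omega>) (e j))\<^sup>2)} \<le> ennreal (sqrt 2 ^ d * exp (- t / (4 * s\<^sup>2)))"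
proof -
  define S where "S \<omega> = (\<Sum>j<d. (ip n (xi \<omega>) (e j))\<^sup>2)" for \<omega>
  have [measurable]: "S \<in> borel_measurable M" unfolding S_def by measurable
  have Q0: "(\<integral>\<^sup>+\<omega>. ennreal (exp (1 / (4 * s\<^sup>2) * S \<omega>)) \<partial>M) \<le> ennreal (sqrt 2 ^ d)"
    using Q[OF assms, of "\<lambda>_. 0"] by (simp add: ip_def S_def)
  have "emeasure M {\<omega>\<in>space M. t \<le> S \<omega>} = (\<integral>\<^sup>+\<omega>. indicator {\<omega>\<in>space M. t \<le> S \<omega>} \<omega> \<partial>M)"
    by (subst nn_integral_indicator) auto
  also have "\<dots> \<le> (\<integral>\<^sup>+\<omega>. ennreal (exp (- t / (4 * s\<^sup>2))) * ennreal (exp (1 / (4 * s\<^sup>2) * S \<omega>)) \<partial>M)"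
  proof (intro nn_integral_mono)
    fix \<omega>
    show "indicator {\<omega>\<in>space M. t \<le> S \<omega>} \<omega> \<le> ennreal (exp (- t / (4 * s\<^sup>2))) * ennreal (exp (1 / (4 * s\<^sup>2) * S \<omega>))"
    proof (cases "t \<le> S \<omega>")
      case True
      have "0 \<le> - t / (4 * s\<^sup>2) + 1 / (4 * s\<^sup>2) * S \<omega>"
        using True s_pos by (simp add: field_simps)
      hence "1 \<le> exp (- t / (4 * s\<^sup>2)) * exp (1 / (4 * s\<^sup>2) * S \<omega>)"
        by (simp add: exp_add[symmetric])
      thus ?thesis by (simp add: indicator_def ennreal_mult[symmetric])
    qed (simp add: indicator_def)
  qed
  also have "\<dots> = ennreal (exp (- t / (4 * s\<^sup>2))) * (\<integral>\<^sup>+\<omega>. ennreal (exp (1 / (4 * s\<^sup>2) * S \<omega>)) \<partial>M)"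
    by (rule nn_integral_cmult) measurable
  also have "\<dots> \<le> ennreal (exp (- t / (4 * s\<^sup>2))) * ennreal (sqrt 2 ^ d)"
    by (intro mult_left_mono Q0) auto
  also have "\<dots> = ennreal (sqrt 2 ^ d * exp (- t / (4 * s\<^sup>2)))"
    by (simp add: ennreal_mult[symmetric] mult.commute)
  finally show ?thesis unfolding S_def .
qed

lemma tail_measure:
  assumes "orthon n e d"
  shows "measure M {\<omega>\<in>space M. t \<le> (\<Sum>j<d. (ip n (xi \<omega>) (e j))\<^sup>2)} \<le> sqrt 2 ^ d * exp (- t / (4 * s\<^sup>2))"
  using tail[OF assms, of t] by (simp add: emeasure_eq_measure ennreal_le_iff)

end


lemma subg_interp:
  fixes M :: "'a measure"
  assumes M: "prob_space M"
    and indep: "prob_space.indep_vars M (\<lambda>_. borel) Y {..<n}"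
    and subg_int: "\<And>i t. i < n \<Longrightarrow>
          integrable M (\<lambda>\<omega>. exp (t * (Y i \<omega> - integral\<^sup>L M (Y i))))"
    and subg: "\<And>i t. i < n \<Longrightarrow>
          integral\<^sup>L M (\<lambda>\<omega>. exp (t * (Y i \<omega> - integral\<^sup>L M (Y i)))) \<le> exp (\<sigma>\<^sup>2 * t\<^sup>2 / 2)"
    and \<sigma>: "0 \<le> \<sigma>" "\<sigma> \<le> s" "0 < s"
  shows "subg M n Y (\<lambda>i. integral\<^sup>L M (Y i)) s"
proof (intro subg.intro subg_axioms.intro M indep \<sigma>(3))
  fix i t assume i: "i < n"
  have "(\<integral>\<^sup>+\<omega>. ennreal (exp (t * (Y i \<omega> - integral\<^sup>L M (Y i)))) \<partial>M)
      = ennreal (integral\<^sup>L M (\<lambda>\<omega>. exp (t * (Y i \<omega> - integral\<^sup>L M (Y i)))))"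
    by (rule nn_integral_eq_integral) (use subg_int[OF i] in auto)
  also have "\<dots> \<le> ennreal (exp (s\<^sup>2 * t\<^sup>2 / 2))"
  proof (intro ennreal_leI order.trans[OF subg[OF i]])
    have "\<sigma>\<^sup>2 \<le> s\<^sup>2" using \<sigma> by (intro power_mono) auto
    thus "exp (\<sigma>\<^sup>2 * t\<^sup>2 / 2) \<le> exp (s\<^sup>2 * t\<^sup>2 / 2)" by (simp add: mult_right_mono)
  qed
  finally show "(\<integral>\<^sup>+\<omega>. ennreal (exp (t * (Y i \<omega> - integral\<^sup>L M (Y i)))) \<partial>M) \<le> ennreal (exp (s\<^sup>2 * t\<^sup>2 / 2))" .
qed

lemma tail_sigma:
  fixes M :: "'a measure"
  assumes M: "prob_space M"
    and indep: "prob_space.indep_vars M (\<lambda>_. borel) Y {..<n}"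
    and subg_int: "\<And>i t. i < n \<Longrightarrow>
          integrable M (\<lambda>\<omega>. exp (t * (Y i \<omega> - integral\<^sup>L M (Y i))))"
    and subg: "\<And>i t. i < n \<Longrightarrow>
          integral\<^sup>L M (\<lambda>\<omega>. exp (t * (Y i \<omega> - integral\<^sup>L M (Y i)))) \<le> exp (\<sigma>\<^sup>2 * t\<^sup>2 / 2)"
    and \<sigma>: "0 \<le> \<sigma>"
    and on: "orthon n e d"
  shows "measure M {\<omega>\<in>space M. \<sigma>\<^sup>2 * t < (\<Sum>j<d. (ip n (\<lambda>i. Y i \<omega> - integral\<^sup>L M (Y i)) (e j))\<^sup>2)}
          \<le> (if \<sigma> = 0 then 0 else sqrt 2 ^ d * exp (- t / 4))"
proof -
  interpret prob_space M by (rule M)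
  define S where "S \<omega> = (\<Sum>j<d. (ip n (\<lambda>i. Y i \<omega> - integral\<^sup>L M (Y i)) (e j))\<^sup>2)" for \<omega>
  have tl: "measure M {\<omega>\<in>space M. r \<le> S \<omega>} \<le> sqrt 2 ^ d * exp (- r / (4 * s\<^sup>2))"
    if "\<sigma> \<le> s" "0 < s" for r s
  proof -
    interpret subg M n Y "\<lambda>i. integral\<^sup>L M (Y i)" s
      by (rule subg_interp[OF M indep subg_int subg \<sigma> that])
    show ?thesis using tail_measure[OF on, of r] by (simp add: S_def xi_def)
  qed
  have Smeas: "S \<in> borel_measurable M"
  proof -
    interpret subg M n Y "\<lambda>i. integral\<^sup>L M (Y i)" "max 1 \<sigma>"
      by (rule subg_interp[OF M indep subg_int subg \<sigma>]) auto
    show ?thesis using S_meas[where d=d and e=e] unfolding S_def[abs_def] xi_def by simp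
  qed
  show ?thesis
  proof (cases "\<sigma> = 0")
    case False
    with \<sigma> have sp: "0 < \<sigma>" by simp
    have "measure M {\<omega>\<in>space M. \<sigma>\<^sup>2 * t < S \<omega>} \<le> measure M {\<omega>\<in>space M. \<sigma>\<^sup>2 * t \<le> S \<omega>}"
      using Smeas by (intro finite_measure_mono) auto
    also have "\<dots> \<le> sqrt 2 ^ d * exp (- (\<sigma>\<^sup>2 * t) / (4 * \<sigma>\<^sup>2))" by (rule tl) (use sp in auto)
    also have "- (\<sigma>\<^sup>2 * t) / (4 * \<sigma>\<^sup>2) = - t / 4" using sp by (simp add: field_simps)
    finally show ?thesis using False by (simp add: S_def)
  next
    case True
    have null: "{\<omega>\<in>space M. r \<le> S \<omega>} \<in> null_sets M" if r: "0 < r" for r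
    proof -
      have "measure M {\<omega>\<in>space M. r \<le> S \<omega>} \<le> 0"
      proof (rule field_le_epsilon)
        fix \<epsilon> :: real assume \<epsilon>: "0 < \<epsilon>"
        define K where "K = max 1 (ln (sqrt 2 ^ d / \<epsilon>) + 1)"
        have K: "0 < K" "ln (sqrt 2 ^ d / \<epsilon>) < K" unfolding K_def by auto
        define s where "s = sqrt (r / (4 * K))"
        have s: "0 < s" using r K by (simp add: s_def)
        have "- r / (4 * s\<^sup>2) = - K" using r K by (simp add: s_def field_simps)
        have "measure M {\<omega>\<in>space M. r \<le> S \<omega>} \<le> sqrt 2 ^ d * exp (- r / (4 * s\<^sup>2))"
          by (rule tl) (use s True in auto)
        also have "- r / (4 * s\<^sup>2) = - K" using r K by (simp add: s_def field_simps)
        also have "sqrt 2 ^ d * exp (- K) \<le> \<epsilon>"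
        proof -
          have "sqrt 2 ^ d / \<epsilon> < exp K" using K \<epsilon> by (metis exp_less_cancel_iff exp_ln divide_pos_pos zero_less_power real_sqrt_gt_zero zero_less_numeral)
          thus ?thesis using \<epsilon> by (simp add: exp_minus field_simps)
        qed
        finally show "measure M {\<omega>\<in>space M. r \<le> S \<omega>} \<le> 0 + \<epsilon>" by simp
      qed
      hence "measure M {\<omega>\<in>space M. r \<le> S \<omega>} = 0" by (simp add: measure_nonneg antisym)
      thus ?thesis using Smeas by (auto simp: null_sets_def emeasure_eq_measure)
    qed
    have "{\<omega>\<in>space M. 0 < S \<omega>} \<in> null_sets M"
    proof (rule null_sets_subset)
      show "(\<Union>k::nat. {\<omega>\<in>space M. 1 / Suc k \<le> S \<omega>}) \<in> null_sets M"
        by (intro null_sets_UN null) auto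
      show "{\<omega>\<in>space M. 0 < S \<omega>} \<in> sets M" using Smeas by measurable
      show "{\<omega>\<in>space M. 0 < S \<omega>} \<subseteq> (\<Union>k::nat. {\<omega>\<in>space M. 1 / Suc k \<le> S \<omega>})"
      proof
        fix \<omega> assume "\<omega> \<in> {\<omega>\<in>space M. 0 < S \<omega>}"
        then obtain k :: nat where "1 / Suc k < S \<omega>" "\<omega> \<in> space M"
          using reals_Archimedean[of "S \<omega>"] by (auto simp: inverse_eq_divide)
        thus "\<omega> \<in> (\<Union>k::nat. {\<omega>\<in>space M. 1 / Suc k \<le> S \<omega>})" by (auto intro!: exI[of _ k])
      qed
    qed
    hence "measure M {\<omega>\<in>space M. 0 < S \<omega>} = 0" by (simp add: measure_eq_0_null_sets)
    thus ?thesis using True by (simp add: S_def)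
  qed
qed



lemma ip_CS: "ip n u v \<le> sqrt (ip n u u) * sqrt (ip n v v)"
proof -
  have "ip n u v \<le> (\<Sum>i<n. \<bar>u i\<bar> * \<bar>v i\<bar>)"
    unfolding ip_def by (intro sum_mono) (simp add: abs_mult[symmetric])
  also have "\<dots> \<le> L2_set u {..<n} * L2_set v {..<n}" by (rule L2_set_mult_ineq)
  finally show ?thesis by (simp add: L2_set_def ip_def power2_eq_square)
qed

lemma sum_CS: fixes d :: nat shows "(\<Sum>j<d. c j * z j) \<le> sqrt (\<Sum>j<d. (c j)\<^sup>2) * sqrt (\<Sum>j<d. (z j)\<^sup>2)"
  using ip_CS[of d c z] by (simp add: ip_def power2_eq_square)

lemma span_bound:
  assumes on: "orthon n e d" and sp: "inspan n e d v"
  shows "ip n u v \<le> sqrt (\<Sum>j<d. (ip n u (e j))\<^sup>2) * sqrt (ip n v v)"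
proof -
  from sp obtain c where c: "\<forall>i<n. v i = (\<Sum>j<d. c j * e j i)" by (auto simp: inspan_def)
  have eq: "ip n u v = ip n u (\<lambda>i. \<Sum>j<d. c j * e j i)" "ip n v v = ip n (\<lambda>i. \<Sum>j<d. c j * e j i) (\<lambda>i. \<Sum>j<d. c j * e j i)"
    using c by (auto intro: ip_cong)
  have "ip n u v = (\<Sum>j<d. c j * ip n u (e j))"
    unfolding eq by (subst ip_comm) (simp add: ip_lincomb ip_comm)
  also have "\<dots> \<le> sqrt (\<Sum>j<d. (c j)\<^sup>2) * sqrt (\<Sum>j<d. (ip n u (e j))\<^sup>2)" by (rule sum_CS)
  also have "(\<Sum>j<d. (c j)\<^sup>2) = ip n v v" unfolding eq by (simp add: orthon_norm[OF on])
  finally show ?thesis by (simp add: mult.commute)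
qed

lemma inspan_sum:
  assumes "finite F" "\<And>j. j \<in> F \<Longrightarrow> inspan n e d (g j)"
  shows "inspan n e d (\<lambda>i. \<Sum>j\<in>F. a j * g j i)"
  using assms
proof (induction F rule: finite_induct)
  case empty
  show ?case unfolding inspan_def by (rule exI[of _ "\<lambda>_. 0"]) simp
next
  case (insert x F)
  from insert.IH insert.prems obtain c where c: "\<forall>i<n. (\<Sum>j\<in>F. a j * g j i) = (\<Sum>j<d. c j * e j i)"
    by (auto simp: inspan_def)
  from insert.prems obtain c' where c': "\<forall>i<n. g x i = (\<Sum>j<d. c' j * e j i)"
    by (auto simp: inspan_def)
  show ?case unfolding inspan_def
    by (rule exI[of _ "\<lambda>j. a x * c' j + c j"])
       (use insert.hyps c c' in \<open>auto simp: sum.distrib sum_distrib_left algebra_simps\<close>)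
qed

lemma inspan_diff:
  assumes "inspan n e d u" "inspan n e d v"
  shows "inspan n e d (\<lambda>i. u i - v i)"
proof -
  from assms obtain c c' where c: "\<forall>i<n. u i = (\<Sum>j<d. c j * e j i)" and c': "\<forall>i<n. v i = (\<Sum>j<d. c' j * e j i)"
    by (auto simp: inspan_def)
  show ?thesis unfolding inspan_def
    by (rule exI[of _ "\<lambda>j. c j - c' j"]) (use c c' in \<open>auto simp: sum_subtractf left_diff_distrib\<close>)
qed

lemma real_claim1:
  fixes A B \<delta> r \<epsilon> :: real
  assumes "0 \<le> A" "0 \<le> B" "0 \<le> \<delta>" "0 \<le> \<epsilon>" "r = sqrt (\<delta>\<^sup>2 + \<epsilon>)"
    and "A\<^sup>2 \<le> B\<^sup>2 + 2 * \<delta> * (A + B) + \<epsilon>"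
  shows "A \<le> B + 2 * r"
proof (rule ccontr)
  assume "\<not> A \<le> B + 2 * r"
  hence lt: "B + 2 * r < A" by simp
  have r0: "0 \<le> r" and rd: "\<delta> \<le> r" and r2: "r\<^sup>2 = \<delta>\<^sup>2 + \<epsilon>"
    using assms by (auto intro: real_le_rsqrt)
  have p: "0 < (A - (B + 2*r)) * (A + (B + 2*r) - 2*\<delta>)"
    using lt rd r0 assms by (intro mult_pos_pos) auto
  have q: "0 \<le> 4*B*(r-\<delta>) + (3*r - \<delta>)*(r-\<delta>)"
    using rd r0 assms by (intro add_nonneg_nonneg mult_nonneg_nonneg) auto
  show False using p q r2 assms(6) by (simp add: algebra_simps power2_eq_square) 
qed

lemma det_bounds:
  fixes a b \<xi> :: "nat \<Rightarrow> real" and \<delta> \<epsilon> :: real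
  assumes hyp: "ip n (\<lambda>i. a i - \<xi> i) (\<lambda>i. a i - \<xi> i) \<le> ip n (\<lambda>i. b i - \<xi> i) (\<lambda>i. b i - \<xi> i) + \<epsilon>"
    and xd: "ip n \<xi> (\<lambda>i. a i - b i) \<le> \<delta> * sqrt (ip n (\<lambda>i. a i - b i) (\<lambda>i. a i - b i))"
    and \<delta>: "0 \<le> \<delta>" and \<epsilon>: "0 \<le> \<epsilon>"
  shows "sqrt (ip n a a) \<le> sqrt (ip n b b) + 2 * sqrt (\<delta>\<^sup>2 + \<epsilon>)"
    and "ip n (\<lambda>i. a i - b i) (\<lambda>i. a i - b i) \<le> 10 * ip n b b + 20/3 * \<delta>\<^sup>2 + 2 * \<epsilon>"
proof -
  define A B N where "A = sqrt (ip n a a)" "B = sqrt (ip n b b)" "N = sqrt (ip n (\<lambda>i. a i - b i) (\<lambda>i. a i - b i))"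
  have A0: "0 \<le> A" and B0: "0 \<le> B" and N0: "0 \<le> N"
    using ip_self_nonneg[of n a] ip_self_nonneg[of n b] ip_self_nonneg[of n "\<lambda>i. a i - b i"]
    by (auto simp: A_B_N_def)
  have AA: "A\<^sup>2 = ip n a a" and BB: "B\<^sup>2 = ip n b b" and NN': "N\<^sup>2 = ip n (\<lambda>i. a i - b i) (\<lambda>i. a i - b i)"
    using ip_self_nonneg[of n a] ip_self_nonneg[of n b] ip_self_nonneg[of n "\<lambda>i. a i - b i"]
    by (simp_all add: A_B_N_def)
  have e1: "ip n (\<lambda>i. a i - \<xi> i) (\<lambda>i. a i - \<xi> i) = ip n a a - 2 * ip n \<xi> a + ip n \<xi> \<xi>"
    by (simp add: ip_def sum_subtractf sum.distrib sum_distrib_left algebra_simps)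
  have e2: "ip n (\<lambda>i. b i - \<xi> i) (\<lambda>i. b i - \<xi> i) = ip n b b - 2 * ip n \<xi> b + ip n \<xi> \<xi>"
    by (simp add: ip_def sum_subtractf sum.distrib sum_distrib_left algebra_simps)
  have e3: "ip n \<xi> (\<lambda>i. a i - b i) = ip n \<xi> a - ip n \<xi> b"
    by (simp add: ip_def sum_subtractf algebra_simps)
  have e4: "ip n (\<lambda>i. a i - b i) (\<lambda>i. a i - b i) = ip n a a - 2 * ip n a b + ip n b b"
    by (simp add: ip_def sum_subtractf sum.distrib sum_distrib_left algebra_simps)
  have e5: "ip n b (\<lambda>i. a i - b i) = ip n a b - ip n b b"
    by (simp add: ip_def sum_subtractf algebra_simps)
  have cs: "- ip n b (\<lambda>i. a i - b i) \<le> B * N"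
    using ip_CS[of n "\<lambda>i. - b i" "\<lambda>i. a i - b i"] by (simp add: A_B_N_def ip_def sum_negf)
  have NAB: "N \<le> A + B"
  proof -
    have "N\<^sup>2 \<le> (A + B)\<^sup>2"
    proof -
      have cs2: "- ip n a b \<le> A * B"
        using ip_CS[of n "\<lambda>i. - a i" b] by (simp add: A_B_N_def ip_def sum_negf)
      show ?thesis using cs2 unfolding NN' e4 AA[symmetric] BB[symmetric] by (simp add: power2_eq_square algebra_simps)
    qed
    thus ?thesis using A0 B0 N0 by (simp add: power_mono_iff)
  qed
  have main: "A\<^sup>2 \<le> B\<^sup>2 + 2 * \<delta> * N + \<epsilon>"
    using hyp xd unfolding e1 e2 e3 AA BB by (simp add: A_B_N_def)
  show "sqrt (ip n a a) \<le> sqrt (ip n b b) + 2 * sqrt (\<delta>\<^sup>2 + \<epsilon>)"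
  proof -
    have "A\<^sup>2 \<le> B\<^sup>2 + 2 * \<delta> * (A + B) + \<epsilon>"
      using main NAB \<delta> mult_left_mono[OF NAB, of "2*\<delta>"] by simp
    from real_claim1[OF A0 B0 \<delta> \<epsilon> refl this] show ?thesis by (simp add: A_B_N_def)
  qed
  have N2: "N\<^sup>2 \<le> 2 * (B + \<delta>) * N + \<epsilon>"
    using main cs unfolding NN' e4 e5 AA[symmetric] BB[symmetric] by (simp add: algebra_simps)
  have "N\<^sup>2 \<le> 4 * (B + \<delta>)\<^sup>2 + 2 * \<epsilon>"
  proof -
    have h0: "0 \<le> (N - 2 * (B + \<delta>))\<^sup>2" by simp
    have h: "(N - 2 * (B + \<delta>))\<^sup>2 = N\<^sup>2 - 4 * ((B + \<delta>) * N) + 4 * (B + \<delta>)\<^sup>2"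
      by (simp add: power2_eq_square algebra_simps)
    have "2 * (B + \<delta>) * N \<le> N\<^sup>2 / 2 + 2 * (B + \<delta>)\<^sup>2"
      using h0 unfolding h by linarith
    thus ?thesis using N2 by simp
  qed
  also have "\<dots> \<le> 10 * B\<^sup>2 + 20/3 * \<delta>\<^sup>2 + 2 * \<epsilon>"
  proof -
    have h0: "0 \<le> (3 * B - 2 * \<delta>)\<^sup>2" by simp
    have h: "(3 * B - 2 * \<delta>)\<^sup>2 = 9 * B\<^sup>2 - 12 * (B * \<delta>) + 4 * \<delta>\<^sup>2"
      by (simp add: power2_eq_square algebra_simps)
    have "2 * B * \<delta> \<le> 3/2 * B\<^sup>2 + 2/3 * \<delta>\<^sup>2"
      using h0 unfolding h by linarith
    thus ?thesis by (simp add: power2_eq_square algebra_simps)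
  qed
  finally show "ip n (\<lambda>i. a i - b i) (\<lambda>i. a i - b i) \<le> 10 * ip n b b + 20/3 * \<delta>\<^sup>2 + 2 * \<epsilon>"
    using NN' BB by simp
qed



lemma cc_vec_attained:
  "\<exists>F. F \<subseteq> {..<p} \<and> supp p \<beta> \<subseteq> F \<and> cc_vec p cl \<beta> = cc_set cl F"
proof -
  define SS where "SS = {cc_set cl F | F. F \<subseteq> {..<p} \<and> supp p \<beta> \<subseteq> F}"
  have "SS = cc_set cl ` {F. F \<subseteq> {..<p} \<and> supp p \<beta> \<subseteq> F}" by (auto simp: SS_def)
  hence fin: "finite SS" by simp
  have ne: "SS \<noteq> {}" unfolding SS_def by (auto simp: supp_def)
  have "Inf SS \<in> SS" using fin ne by (simp add: cInf_eq_Min)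
  thus ?thesis by (auto simp: SS_def cc_vec_def)
qed

lemma cl_nonneg: "is_coding_length p cl \<Longrightarrow> F \<subseteq> {..<p} \<Longrightarrow> 0 \<le> cl F"
  by (auto simp: is_coding_length_def)

lemma cc_set_nonneg: "is_coding_length p cl \<Longrightarrow> F \<subseteq> {..<p} \<Longrightarrow> 0 \<le> cc_set cl F"
  using cl_nonneg[of p cl F] by (simp add: cc_set_def)

lemma cc_vec_nonneg: "is_coding_length p cl \<Longrightarrow> 0 \<le> cc_vec p cl \<beta>"
  using cc_vec_attained[of p \<beta> cl] cc_set_nonneg by metis

lemma rho_le:
  assumes "F \<subseteq> {..<p}" "cc_set cl F \<le> s" "supp p \<Delta> \<subseteq> F" "\<exists>j<p. \<Delta> j \<noteq> 0"
  shows "rho_minus n p X cl s \<le> ereal ((1 / real n) * (norm2 n (matvec p X \<Delta>))\<^sup>2 / (norm2 p \<Delta>)\<^sup>2)"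
proof -
  have "rho_minus_set n p X F \<le> ereal ((1 / real n) * (norm2 n (matvec p X \<Delta>))\<^sup>2 / (norm2 p \<Delta>)\<^sup>2)"
    unfolding rho_minus_set_def using assms by (intro Inf_lower) blast
  moreover have "rho_minus n p X cl s \<le> rho_minus_set n p X F"
    unfolding rho_minus_def using assms by (intro Inf_lower) blast
  ultimately show ?thesis by simp
qed

lemma rho_nonneg: "0 \<le> rho_minus n p X cl s"
  unfolding rho_minus_def rho_minus_set_def by (intro Inf_greatest) (auto intro!: Inf_greatest)

lemma cl_weight_nonneg: "0 \<le> cl_weight e"
  by (simp add: cl_weight_def)

lemma inspan_cong: "inspan n e d u \<Longrightarrow> (\<And>i. i < n \<Longrightarrow> v i = u i) \<Longrightarrow> inspan n e d v"
  by (auto simp: inspan_def)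

lemma norm2_sq: "(norm2 m v)\<^sup>2 = ip m v v"
  by (simp add: norm2_def ip_def power2_eq_square sum_nonneg)

lemma norm2_ip: "norm2 m v = sqrt (ip m v v)"
  by (simp add: norm2_def ip_def power2_eq_square)

lemma bound_F:
  fixes k D :: nat and r L \<eta> :: real
  assumes "D \<le> k + 1" "0 \<le> r" "exp (- L) = \<eta> / 6" "0 \<le> L"
  shows "sqrt 2 ^ D * exp (- (11/2 * (real k + r) + 43/10 * L) / 4) \<le> \<eta> / 3 * 2 powr (- r)"
proof -
  have ln2: "ln 2 < (1::real)" by (rule ln_2_less_1)
  have s1: "sqrt 2 ^ D \<le> sqrt 2 * sqrt 2 ^ k"
    using power_increasing[OF assms(1), of "sqrt 2"] by simp
  have s2: "sqrt 2 ^ k \<le> exp (11/8 * real k)"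
  proof -
    have "exp (real k * (ln 2 / 2)) = exp (ln (sqrt 2)) ^ k"
      by (subst exp_of_nat_mult[symmetric]) (simp add: ln_sqrt)
    hence "sqrt 2 ^ k = exp (real k * (ln 2 / 2))" by simp
    also have "\<dots> \<le> exp (11/8 * real k)" using ln2 mult_left_mono[of "ln 2" 1 "real k"] by (intro exp_le_cancel_iff[THEN iffD2]) simp
    finally show ?thesis .
  qed
  have s3: "exp (- (11/8) * r) \<le> 2 powr (- r)"
    using ln2 assms(2) mult_left_mono[of "ln 2" 1 r] by (simp add: powr_def)
  have s4: "exp (- (43/40) * L) \<le> \<eta> / 6"
    using assms(3,4) by (subst assms(3)[symmetric]) simp
  have eq: "exp (- (11/2 * (real k + r) + 43/10 * L) / 4) = exp (- (11/8) * real k) * exp (- (11/8) * r) * exp (- (43/40) * L)"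
    by (simp add: exp_add[symmetric] field_simps)
  have "sqrt 2 ^ D * exp (- (11/2 * (real k + r) + 43/10 * L) / 4)
      \<le> (sqrt 2 * exp (11/8 * real k)) * (exp (- (11/8) * real k) * exp (- (11/8) * r) * exp (- (43/40) * L))"
    unfolding eq by (intro mult_right_mono order.trans[OF s1] mult_left_mono s2) auto
  also have "\<dots> = sqrt 2 * (exp (- (11/8) * r) * exp (- (43/40) * L))"
    by (simp add: exp_add[symmetric] mult_ac)
  also have "\<dots> \<le> 2 * (2 powr (- r) * (\<eta> / 6))"
    using s3 s4 by (intro mult_mono) (auto simp: real_sqrt_le_iff[of 2 4, simplified])
  also have "\<dots> = \<eta> / 3 * 2 powr (- r)" by simp
  finally show ?thesis .
qed

lemma S_measurable:
  assumes M: "prob_space M" and indep: "prob_space.indep_vars M (\<lambda>_. borel) Y {..<n}"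
  shows "(\<lambda>\<omega>. \<Sum>j<d. (ip n (\<lambda>i. Y i \<omega> - integral\<^sup>L M (Y i)) (e j))\<^sup>2) \<in> borel_measurable M"
proof -
  have Ym: "i < n \<Longrightarrow> Y i \<in> borel_measurable M" for i
    using indep M by (auto simp: prob_space.indep_vars_def)
  show ?thesis unfolding ip_def
    by (intro borel_measurable_sum borel_measurable_power borel_measurable_times borel_measurable_diff Ym) auto
qed



theorem theorem2:
  fixes M :: "'a measure" and n p :: nat and X :: "nat \<Rightarrow> nat \<Rightarrow> real"
    and Y :: "nat \<Rightarrow> 'a \<Rightarrow> real" and \<sigma> \<eta> :: real
    and cl :: "nat set \<Rightarrow> ereal" and \<beta>bar :: "nat \<Rightarrow> real"
  assumes M: "prob_space M"
    and indep: "prob_space.indep_vars M (\<lambda>_. borel) Y {..<n}"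
    and intY: "\<And>i. i < n \<Longrightarrow> integrable M (Y i)"
    and \<sigma>: "0 \<le> \<sigma>"
    and subg_int: "\<And>i t. i < n \<Longrightarrow>
          integrable M (\<lambda>\<omega>. exp (t * (Y i \<omega> - integral\<^sup>L M (Y i))))"
    and subg: "\<And>i t. i < n \<Longrightarrow>
          integral\<^sup>L M (\<lambda>\<omega>. exp (t * (Y i \<omega> - integral\<^sup>L M (Y i)))) \<le> exp (\<sigma>\<^sup>2 * t\<^sup>2 / 2)"
    and cl: "is_coding_length p cl"
    and \<eta>: "0 < \<eta>" "\<eta> < 1"
  shows "\<exists>A \<in> sets M. measure M A > 1 - \<eta> \<and>
    (\<forall>\<omega> \<in> A. \<forall>\<epsilon> \<ge> 0. \<forall>\<beta>hat.
       (norm2 n (\<lambda>i. matvec p X \<beta>hat i - Y i \<omega>))\<^sup>2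
         \<le> (norm2 n (\<lambda>i. matvec p X \<beta>bar i - Y i \<omega>))\<^sup>2 + \<epsilon> \<longrightarrow>
       (let T = ereal (7.4 * \<sigma>\<^sup>2) * cc_vec p cl \<beta>hat + ereal (4.7 * \<sigma>\<^sup>2 * ln (6 / \<eta>) + \<epsilon>) in
          T \<noteq> \<infinity> \<longrightarrow>
          norm2 n (\<lambda>i. matvec p X \<beta>hat i - integral\<^sup>L M (Y i))
            \<le> norm2 n (\<lambda>i. matvec p X \<beta>bar i - integral\<^sup>L M (Y i))
               + \<sigma> * sqrt (2 * ln (6 / \<eta>)) + 2 * sqrt (real_of_ereal T))
       \<and> (subadditive_cc p cl \<longrightarrow>
          ereal (real n) * rho_minus n p X cl (cc_vec p cl \<beta>hat + cc_vec p cl \<beta>bar)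
              * ereal ((norm2 p (\<lambda>j. \<beta>hat j - \<beta>bar j))\<^sup>2)
            \<le> ereal (10 * (norm2 n (\<lambda>i. matvec p X \<beta>bar i - integral\<^sup>L M (Y i)))\<^sup>2)
               + ereal (37 * \<sigma>\<^sup>2) * cc_vec p cl \<beta>hat
               + ereal (29 * \<sigma>\<^sup>2 * ln (6 / \<eta>) + 2.5 * \<epsilon>)))"
proof -
  interpret P: prob_space M by (rule M)
  define L where "L = ln (6 / \<eta>)"
  have L0: "0 < L" using \<eta> by (simp add: L_def)
  have expL: "exp (- L) = \<eta> / 6" using \<eta> by (simp add: L_def exp_minus)
  define col where "col j = (\<lambda>i. X i j)" for j
  define V where "V F = matvec p X \<beta>bar # map col (sorted_list_of_set F)" for F
  have "\<forall>F. \<exists>ed. snd ed \<le> length (V F) \<and> orthon n (fst ed) (snd ed) \<and> (\<forall>v\<in>set (V F). inspan n (fst ed) (snd ed) v)"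
    using gram_schmidt by fastforce
  from choice[OF this] obtain g where g: "\<And>F. snd (g F) \<le> length (V F) \<and> orthon n (fst (g F)) (snd (g F))
      \<and> (\<forall>v\<in>set (V F). inspan n (fst (g F)) (snd (g F)) v)" by blast
  define e where "e F = fst (g F)" for F
  define d where "d F = snd (g F)" for F
  have d_le: "d F \<le> card F + 1" if "finite F" for F
    using g[of F] that by (simp add: d_def V_def)
  have on: "orthon n (e F) (d F)" for F using g[of F] by (simp add: e_def d_def)
  have sp: "\<And>v. v \<in> set (V F) \<Longrightarrow> inspan n (e F) (d F) v" for F using g[of F] by (simp add: e_def d_def)
  define \<xi> where "\<xi> \<omega> = (\<lambda>i. Y i \<omega> - integral\<^sup>L M (Y i))" for \<omega>
  define S where "S F \<omega> = (\<Sum>j<d F. (ip n (\<xi> \<omega>) (e F j))\<^sup>2)" for F \<omega>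
  define r where "r F = real_of_ereal (cl F)" for F
  define x where "x F = 11/2 * (real (card F) + r F) + 43/10 * L" for F
  define Ev where "Ev F = {\<omega>\<in>space M. S F \<omega> \<le> \<sigma>\<^sup>2 * x F}" for F
  define FF where "FF = {F. F \<subseteq> {..<p} \<and> (\<sigma> = 0 \<or> cl F \<noteq> \<infinity>)}"
  define A where "A = (\<Inter>F\<in>FF. Ev F)"
  have FF_sub: "FF \<subseteq> Pow {..<p}" by (auto simp: FF_def)
  have finFF: "finite FF" by (rule finite_subset[OF FF_sub]) simp
  have clE: "cl {} = 0" using cl by (simp add: is_coding_length_def)
  have emFF: "{} \<in> FF" using clE by (simp add: FF_def)
  have Smeas: "S F \<in> borel_measurable M" for F
    using S_measurable[OF M indep, where d="d F" and e="e F"] by (simp add: S_def[abs_def] \<xi>_def)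
  have Ev_sets: "Ev F \<in> sets M" for F
    unfolding Ev_def using Smeas[of F] by measurable
  have A_sets: "A \<in> sets M" unfolding A_def using finFF emFF Ev_sets by auto
  have compl: "space M - A = (\<Union>F\<in>FF. {\<omega>\<in>space M. \<sigma>\<^sup>2 * x F < S F \<omega>})"
    using emFF unfolding A_def Ev_def by (auto simp: not_le) (meson leD)
  have each: "measure M {\<omega>\<in>space M. \<sigma>\<^sup>2 * x F < S F \<omega>} \<le> \<eta> / 3 * cl_weight (cl F)" if F: "F \<in> FF" for F
  proof -
    have "measure M {\<omega>\<in>space M. \<sigma>\<^sup>2 * x F < S F \<omega>} \<le> (if \<sigma> = 0 then 0 else sqrt 2 ^ d F * exp (- x F / 4))"
      using tail_sigma[OF M indep subg_int subg \<sigma> on[of F], of "x F"] by (simp add: S_def \<xi>_def)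
    also have "\<dots> \<le> \<eta> / 3 * cl_weight (cl F)"
    proof (cases "\<sigma> = 0")
      case True thus ?thesis using \<eta> by (simp add: cl_weight_nonneg)
    next
      case False
      have Fsub: "F \<subseteq> {..<p}" and ninf: "cl F \<noteq> \<infinity>" using F False by (auto simp: FF_def)
      have fin: "finite F" using Fsub finite_subset by blast
      have c0: "0 \<le> cl F" by (rule cl_nonneg[OF cl Fsub])
      have r0: "0 \<le> r F" using c0 by (simp add: r_def real_of_ereal_pos)
      have "sqrt 2 ^ d F * exp (- x F / 4) \<le> \<eta> / 3 * 2 powr (- r F)"
        unfolding x_def by (rule bound_F[OF d_le[OF fin] r0 expL]) (use L0 in simp)
      thus ?thesis using False ninf by (simp add: cl_weight_def r_def)
    qed
    finally show ?thesis .
  qed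
  have "measure M (space M - A) \<le> (\<Sum>F\<in>FF. measure M {\<omega>\<in>space M. \<sigma>\<^sup>2 * x F < S F \<omega>})"
    unfolding compl using Smeas by (intro P.finite_measure_subadditive_finite finFF) auto
  also have "\<dots> \<le> (\<Sum>F\<in>FF. \<eta> / 3 * cl_weight (cl F))" by (intro sum_mono each)
  also have "\<dots> \<le> (\<Sum>F\<in>Pow {..<p}. \<eta> / 3 * cl_weight (cl F))"
    using \<eta> by (intro sum_mono2 FF_sub) (auto simp: cl_weight_nonneg)
  also have "\<dots> = \<eta> / 3 * (\<Sum>F\<in>Pow {..<p}. cl_weight (cl F))" by (simp add: sum_distrib_left)
  also have "(\<Sum>F\<in>Pow {..<p}. cl_weight (cl F)) = cl_weight (cl {}) + (\<Sum>F\<in>{F. F \<subseteq> {..<p} \<and> F \<noteq> {}}. cl_weight (cl F))"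
  proof -
    have "Pow {..<p} = insert {} {F. F \<subseteq> {..<p} \<and> F \<noteq> {}}" by auto
    moreover have "finite {F. F \<subseteq> {..<p} \<and> F \<noteq> {}}" by (rule finite_subset[of _ "Pow {..<p}"]) auto
    ultimately show ?thesis by simp
  qed
  also have "\<dots> \<le> 1 + 1" using cl clE by (intro add_mono) (auto simp: is_coding_length_def cl_weight_def)
  finally have mc: "measure M (space M - A) \<le> \<eta> / 3 * 2" using \<eta> by simp
  have mA: "measure M A > 1 - \<eta>"
    using mc P.prob_compl[OF A_sets] \<eta> by simp
  show ?thesis
  proof (intro bexI[OF _ A_sets] conjI[OF mA] ballI allI impI)
    fix \<omega> \<epsilon> \<beta>hat
    assume \<omega>A: "\<omega> \<in> A" and \<epsilon>: "0 \<le> \<epsilon>"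
      and H: "(norm2 n (\<lambda>i. matvec p X \<beta>hat i - Y i \<omega>))\<^sup>2 \<le> (norm2 n (\<lambda>i. matvec p X \<beta>bar i - Y i \<omega>))\<^sup>2 + \<epsilon>"
    show "(let T = ereal (7.4 * \<sigma>\<^sup>2) * cc_vec p cl \<beta>hat + ereal (4.7 * \<sigma>\<^sup>2 * ln (6 / \<eta>) + \<epsilon>) in
          T \<noteq> \<infinity> \<longrightarrow>
          norm2 n (\<lambda>i. matvec p X \<beta>hat i - integral\<^sup>L M (Y i))
            \<le> norm2 n (\<lambda>i. matvec p X \<beta>bar i - integral\<^sup>L M (Y i))
               + \<sigma> * sqrt (2 * ln (6 / \<eta>)) + 2 * sqrt (real_of_ereal T))
       \<and> (subadditive_cc p cl \<longrightarrow>
          ereal (real n) * rho_minus n p X cl (cc_vec p cl \<beta>hat + cc_vec p cl \<beta>bar)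
              * ereal ((norm2 p (\<lambda>j. \<beta>hat j - \<beta>bar j))\<^sup>2)
            \<le> ereal (10 * (norm2 n (\<lambda>i. matvec p X \<beta>bar i - integral\<^sup>L M (Y i)))\<^sup>2)
               + ereal (37 * \<sigma>\<^sup>2) * cc_vec p cl \<beta>hat
               + ereal (29 * \<sigma>\<^sup>2 * ln (6 / \<eta>) + 2.5 * \<epsilon>))"
    proof -
    obtain F where F: "F \<subseteq> {..<p}" "supp p \<beta>hat \<subseteq> F" "cc_vec p cl \<beta>hat = cc_set cl F"
      using cc_vec_attained by blast
    obtain F' where F': "F' \<subseteq> {..<p}" "supp p \<beta>bar \<subseteq> F'" "cc_vec p cl \<beta>bar = cc_set cl F'"
      using cc_vec_attained by blast
    have finF: "finite F" using F(1) finite_subset by blast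
    define a where "a = (\<lambda>i. matvec p X \<beta>hat i - integral\<^sup>L M (Y i))"
    define b where "b = (\<lambda>i. matvec p X \<beta>bar i - integral\<^sup>L M (Y i))"
    define Dv where "Dv = (\<lambda>i. a i - b i)"
    define \<Delta> where "\<Delta> = (\<lambda>j. \<beta>hat j - \<beta>bar j)"
    have Dv_eq: "Dv = (\<lambda>i. matvec p X \<beta>hat i - matvec p X \<beta>bar i)" by (simp add: Dv_def a_def b_def)
    have mD: "matvec p X \<Delta> = Dv"
      by (simp add: Dv_eq matvec_def \<Delta>_def sum_subtractf right_diff_distrib)
    have hyp: "ip n (\<lambda>i. a i - \<xi> \<omega> i) (\<lambda>i. a i - \<xi> \<omega> i) \<le> ip n (\<lambda>i. b i - \<xi> \<omega> i) (\<lambda>i. b i - \<xi> \<omega> i) + \<epsilon>"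
    proof -
      have "(\<lambda>i. a i - \<xi> \<omega> i) = (\<lambda>i. matvec p X \<beta>hat i - Y i \<omega>)" "(\<lambda>i. b i - \<xi> \<omega> i) = (\<lambda>i. matvec p X \<beta>bar i - Y i \<omega>)"
        by (auto simp: a_def b_def \<xi>_def)
      thus ?thesis using H by (simp add: norm2_sq)
    qed
    have spD: "inspan n (e F) (d F) Dv"
    proof -
      have hat: "matvec p X \<beta>hat i = (\<Sum>j\<in>F. \<beta>hat j * col j i)" for i
      proof -
        have "matvec p X \<beta>hat i = (\<Sum>j\<in>{..<p}. \<beta>hat j * col j i)" by (simp add: matvec_def col_def mult.commute)
        also have "\<dots> = (\<Sum>j\<in>F. \<beta>hat j * col j i)"
          using F(1,2) by (intro sum.mono_neutral_right) (auto simp: supp_def)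
        finally show ?thesis .
      qed
      have "inspan n (e F) (d F) (\<lambda>i. (\<Sum>j\<in>F. \<beta>hat j * col j i) - matvec p X \<beta>bar i)"
      proof (intro inspan_diff inspan_sum finF)
        fix j assume "j \<in> F" thus "inspan n (e F) (d F) (col j)" using finF by (intro sp) (simp add: V_def)
      next
        show "inspan n (e F) (d F) (matvec p X \<beta>bar)" by (intro sp) (simp add: V_def)
      qed
      thus ?thesis by (rule inspan_cong) (simp add: Dv_eq hat)
    qed
    define \<delta> where "\<delta> = sqrt (S F \<omega>)"
    have S0: "0 \<le> S F \<omega>" by (simp add: S_def sum_nonneg)
    have \<delta>0: "0 \<le> \<delta>" and \<delta>2: "\<delta>\<^sup>2 = S F \<omega>" using S0 by (auto simp: \<delta>_def)
    have xd: "ip n (\<xi> \<omega>) Dv \<le> \<delta> * sqrt (ip n Dv Dv)"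
      using span_bound[OF on spD, of "\<xi> \<omega>"] by (simp add: \<delta>_def S_def)
    have db1: "sqrt (ip n a a) \<le> sqrt (ip n b b) + 2 * sqrt (\<delta>\<^sup>2 + \<epsilon>)"
      and db2: "ip n Dv Dv \<le> 10 * ip n b b + 20/3 * \<delta>\<^sup>2 + 2 * \<epsilon>"
      using det_bounds[OF hyp _ \<delta>0 \<epsilon>] xd by (auto simp: Dv_def)
    have ch0: "0 \<le> cc_vec p cl \<beta>hat" by (rule cc_vec_nonneg[OF cl])
    have ipD0: "0 \<le> ip n Dv Dv" by (rule ip_self_nonneg)
    have LHS: "ereal (real n) * rho_minus n p X cl (cc_vec p cl \<beta>hat + cc_vec p cl \<beta>bar)
              * ereal ((norm2 p \<Delta>)\<^sup>2) \<le> ereal (ip n Dv Dv)" if sa: "subadditive_cc p cl"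
    proof (cases "\<exists>j<p. \<Delta> j \<noteq> 0")
      case False
      hence "norm2 p \<Delta> = 0" by (simp add: norm2_def)
      thus ?thesis using ipD0 by (simp add: zero_ereal_def[symmetric])
    next
      case True
      have G: "F \<union> F' \<subseteq> {..<p}" using F F' by auto
      have cG: "cc_set cl (F \<union> F') \<le> cc_vec p cl \<beta>hat + cc_vec p cl \<beta>bar"
        using sa F F' by (simp add: subadditive_cc_def)
      have supp\<Delta>: "supp p \<Delta> \<subseteq> F \<union> F'" using F(2) F'(2) by (auto simp: supp_def \<Delta>_def subset_iff)
      define R where "R = (1 / real n) * (norm2 n (matvec p X \<Delta>))\<^sup>2 / (norm2 p \<Delta>)\<^sup>2"
      have rho: "rho_minus n p X cl (cc_vec p cl \<beta>hat + cc_vec p cl \<beta>bar) \<le> ereal R"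
        unfolding R_def by (rule rho_le[OF G cG supp\<Delta> True])
      have q0: "0 < (norm2 p \<Delta>)\<^sup>2"
      proof -
        obtain j where j: "j < p" "\<Delta> j \<noteq> 0" using True by blast
        have "0 < (\<Sum>i<p. (\<Delta> i)\<^sup>2)"
          using j by (intro sum_pos2[of _ j]) auto
        thus ?thesis by (simp add: norm2_def)
      qed
      have "ereal (real n) * rho_minus n p X cl (cc_vec p cl \<beta>hat + cc_vec p cl \<beta>bar) * ereal ((norm2 p \<Delta>)\<^sup>2)
          \<le> ereal (real n) * ereal R * ereal ((norm2 p \<Delta>)\<^sup>2)"
        by (intro ereal_mult_right_mono ereal_mult_left_mono rho) (use q0 in auto)
      also have "\<dots> = ereal (real n * R * (norm2 p \<Delta>)\<^sup>2)" by simp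
      also have "real n * R * (norm2 p \<Delta>)\<^sup>2 \<le> ip n Dv Dv"
      proof (cases "n = 0")
        case True thus ?thesis using ipD0 by (simp add: R_def)
      next
        case False thus ?thesis using q0 by (simp add: R_def mD norm2_sq)
      qed
      finally show ?thesis by simp
    qed
    show "?thesis"
    proof (cases "\<sigma> \<noteq> 0 \<and> cl F = \<infinity>")
      case True
      have chinf: "cc_vec p cl \<beta>hat = \<infinity>" using True F(3) by (simp add: cc_set_def)
      have sp0: "0 < \<sigma>\<^sup>2" using True by simp
      show ?thesis using chinf sp0 by (simp add: Let_def)
    next
      case False
      hence FFF: "F \<in> FF" using F(1) by (auto simp: FF_def)
      have Sb: "\<delta>\<^sup>2 \<le> \<sigma>\<^sup>2 * x F" using \<omega>A FFF by (auto simp: A_def Ev_def \<delta>2)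
      define c where "c = real (card F) + r F"
      have rF0: "0 \<le> r F" using cl_nonneg[OF cl F(1)] by (simp add: r_def real_of_ereal_pos)
      have c0: "0 \<le> c" using rF0 by (simp add: c_def)
      have nb: "norm2 n b = sqrt (ip n b b)" "(norm2 n b)\<^sup>2 = ip n b b" using ip_self_nonneg[of n b] by (simp_all add: norm2_ip norm2_sq)
      show ?thesis
      proof (cases "\<sigma> = 0")
        case True
        have d0: "\<delta>\<^sup>2 = 0" using Sb True \<delta>0 by simp
        show ?thesis
        proof (intro conjI impI)
          show "let T = ereal (7.4 * \<sigma>\<^sup>2) * cc_vec p cl \<beta>hat + ereal (4.7 * \<sigma>\<^sup>2 * ln (6 / \<eta>) + \<epsilon>) in
              T \<noteq> \<infinity> \<longrightarrow> norm2 n (\<lambda>i. matvec p X \<beta>hat i - integral\<^sup>L M (Y i))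
              \<le> norm2 n (\<lambda>i. matvec p X \<beta>bar i - integral\<^sup>L M (Y i)) + \<sigma> * sqrt (2 * ln (6 / \<eta>)) + 2 * sqrt (real_of_ereal T)"
            using db1 True d0 by (simp add: zero_ereal_def[symmetric] Let_def norm2_ip a_def[symmetric] b_def[symmetric])
          assume sa: "subadditive_cc p cl"
          have "ereal (ip n Dv Dv) \<le> ereal (10 * (norm2 n b)\<^sup>2 + 2.5 * \<epsilon>)"
            using db2 d0 \<epsilon> nb by simp
          also have "\<dots> = ereal (10 * (norm2 n b)\<^sup>2) + ereal (37 * \<sigma>\<^sup>2) * cc_vec p cl \<beta>hat
               + ereal (29 * \<sigma>\<^sup>2 * ln (6 / \<eta>) + 2.5 * \<epsilon>)"
            using True by (simp add: zero_ereal_def[symmetric])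
          finally show "ereal (real n) * rho_minus n p X cl (cc_vec p cl \<beta>hat + cc_vec p cl \<beta>bar)
              * ereal ((norm2 p (\<lambda>j. \<beta>hat j - \<beta>bar j))\<^sup>2)
            \<le> ereal (10 * (norm2 n (\<lambda>i. matvec p X \<beta>bar i - integral\<^sup>L M (Y i)))\<^sup>2)
               + ereal (37 * \<sigma>\<^sup>2) * cc_vec p cl \<beta>hat
               + ereal (29 * \<sigma>\<^sup>2 * ln (6 / \<eta>) + 2.5 * \<epsilon>)"
            using LHS[OF sa] by (simp add: b_def[symmetric] \<Delta>_def[symmetric])
        qed
      next
        case sne: False
        have ninf: "cl F \<noteq> \<infinity>" using False sne by simp
        have clr: "cl F = ereal (r F)"
          using ninf cl_nonneg[OF cl F(1)] by (cases "cl F") (auto simp: r_def)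
        have chc: "cc_vec p cl \<beta>hat = ereal c" using F(3) clr by (simp add: cc_set_def c_def)
        have sp: "0 < \<sigma>\<^sup>2" using sne by simp
        have Sb': "\<delta>\<^sup>2 \<le> \<sigma>\<^sup>2 * (11/2 * c + 43/10 * L)" using Sb by (simp add: x_def c_def)
        show ?thesis
        proof (intro conjI impI)
          have "\<delta>\<^sup>2 + \<epsilon> \<le> 7.4 * \<sigma>\<^sup>2 * c + (4.7 * \<sigma>\<^sup>2 * L + \<epsilon>)"
          proof -
            have "\<sigma>\<^sup>2 * (11/2 * c + 43/10 * L) \<le> \<sigma>\<^sup>2 * (7.4 * c + 4.7 * L)"
              using c0 L0 sp by (intro mult_left_mono) auto
            thus ?thesis using Sb' by (simp add: algebra_simps)
          qed
          hence sq: "sqrt (\<delta>\<^sup>2 + \<epsilon>) \<le> sqrt (7.4 * \<sigma>\<^sup>2 * c + (4.7 * \<sigma>\<^sup>2 * L + \<epsilon>))"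
            by (rule real_sqrt_le_mono)
          have s0: "0 \<le> \<sigma> * sqrt (2 * L)" using \<sigma> L0 by simp
          have key: "sqrt (ip n a a) \<le> sqrt (ip n b b) + \<sigma> * sqrt (2 * L) + 2 * sqrt (7.4 * \<sigma>\<^sup>2 * c + (4.7 * \<sigma>\<^sup>2 * L + \<epsilon>))"
            using db1 sq s0 by linarith
          show "let T = ereal (7.4 * \<sigma>\<^sup>2) * cc_vec p cl \<beta>hat + ereal (4.7 * \<sigma>\<^sup>2 * ln (6 / \<eta>) + \<epsilon>) in
              T \<noteq> \<infinity> \<longrightarrow> norm2 n (\<lambda>i. matvec p X \<beta>hat i - integral\<^sup>L M (Y i))
              \<le> norm2 n (\<lambda>i. matvec p X \<beta>bar i - integral\<^sup>L M (Y i)) + \<sigma> * sqrt (2 * ln (6 / \<eta>)) + 2 * sqrt (real_of_ereal T)"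
            using key chc by (simp add: Let_def norm2_ip a_def[symmetric] b_def[symmetric] L_def[symmetric])
        next
          assume sa: "subadditive_cc p cl"
          have "20/3 * \<delta>\<^sup>2 \<le> 20/3 * (\<sigma>\<^sup>2 * (11/2 * c + 43/10 * L))" using Sb' by simp
          also have "\<dots> \<le> 37 * \<sigma>\<^sup>2 * c + 29 * \<sigma>\<^sup>2 * L"
          proof -
            have "\<sigma>\<^sup>2 * (20/3 * (11/2 * c + 43/10 * L)) \<le> \<sigma>\<^sup>2 * (37 * c + 29 * L)"
              using c0 L0 sp by (intro mult_left_mono) auto
            thus ?thesis by (simp add: algebra_simps)
          qed
          finally have fin: "ereal (ip n Dv Dv) \<le> ereal (10 * (norm2 n b)\<^sup>2 + 37 * \<sigma>\<^sup>2 * c + (29 * \<sigma>\<^sup>2 * L + 2.5 * \<epsilon>))"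
            using db2 \<epsilon> nb by simp
          thus "ereal (real n) * rho_minus n p X cl (cc_vec p cl \<beta>hat + cc_vec p cl \<beta>bar)
              * ereal ((norm2 p (\<lambda>j. \<beta>hat j - \<beta>bar j))\<^sup>2)
            \<le> ereal (10 * (norm2 n (\<lambda>i. matvec p X \<beta>bar i - integral\<^sup>L M (Y i)))\<^sup>2)
               + ereal (37 * \<sigma>\<^sup>2) * cc_vec p cl \<beta>hat
               + ereal (29 * \<sigma>\<^sup>2 * ln (6 / \<eta>) + 2.5 * \<epsilon>)"
            using order.trans[OF LHS[OF sa] fin] chc by (simp add: b_def[symmetric] \<Delta>_def[symmetric] L_def[symmetric])
        qed
      qed
    qed
    qed
  qed
qed


end
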